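(* Let $X_1,\ldots,X_m$ be variables, let $r,s\ge1$, $t=rs$, let $c_1,\ldots,c_t\in\mathbb{N}^m$ with $\min_i c_{ij}=0$ for each $1\le j\le m$, and let $\rho:\{1,\ldots,r\}\times\{1,\ldots,s\}\to\{1,\ldots,t\}$ be a bijection. Then there is at most one factorisation of $\sum_{i=1}^t X^{c_i}$ of the form $(X^{a_1}+\cdots+X^{a_r})(X^{b_1}+\cdots+X^{b_s})=X^{c_1}+\cdots+X^{c_t}$ with bijection $\rho$, i.e. at most one pair of sequences $(a_1,\ldots,a_r)$, $(b_1,\ldots,b_s)$ in $\mathbb{N}^m$ with $a_i+b_j=c_{\rho(i,j)}$ for all $i,j$.
   Context: $\mathbb{N}=\{0,1,2,\ldots\}$; for $\gamma=(\gamma_1,\ldots,\gamma_m)\in\mathbb{N}^m$, $X^\gamma=\prod_{j=1}^m X_j^{\gamma_j}$. A factorisation of $\sum_{i=1}^t X^{c_i}$ of the given form is specified by sequences $(a_1,\ldots,a_r)$, $(b_1,\ldots,b_s)$ in $\mathbb{N}^m$ and a bijection $\rho:\{1,\ldots,r\}\times\{1,\ldots,s\}\to\{1,\ldots,t\}$ with $a_i+b_j=c_{\rho(i,j)}$ for all $i,j$. *)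

theory Defs
  imports Main
begin

end

theory Submission
  imports Defs
begin

theorem mainTheorem6:
  fixes m r s t :: nat
    and c :: "nat \<Rightarrow> nat \<Rightarrow> nat"
    and \<rho> :: "nat \<times> nat \<Rightarrow> nat"
    and a b a' b' :: "nat \<Rightarrow> nat \<Rightarrow> nat"
  assumes "r \<ge> 1" and "s \<ge> 1" and "t = r * s"
    and "\<forall>j\<in>{1..m}. Min ((\<lambda>i. c i j) ` {1..t}) = 0"
    and "bij_betw \<rho> ({1..r} \<times> {1..s}) {1..t}"
    and "\<forall>i\<in>{1..r}. \<forall>j\<in>{1..s}. \<forall>k\<in>{1..m}. a i k + b j k = c (\<rho> (i, j)) k"
    and "\<forall>i\<in>{1..r}. \<forall>j\<in>{1..s}. \<forall>k\<in>{1..m}. a' i k + b' j k = c (\<rho> (i, j)) k"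
  shows "(\<forall>i\<in>{1..r}. \<forall>k\<in>{1..m}. a i k = a' i k) \<and>
         (\<forall>j\<in>{1..s}. \<forall>k\<in>{1..m}. b j k = b' j k)"
proof -
  have main: "a i k = a' i k \<and> b j k = b' j k" if i: "i \<in> {1..r}" and j: "j \<in> {1..s}" and k: "k \<in> {1..m}" for i j k
  proof -
    have t1: "t \<ge> 1" using assms(1,2,3) by simp
    have "Min ((\<lambda>i. c i k) ` {1..t}) \<in> (\<lambda>i. c i k) ` {1..t}"
      using t1 by (intro Min_in) auto
    then obtain t0 where t0: "t0 \<in> {1..t}" "c t0 k = 0" using assms(4) k by auto
    then obtain p where p: "p \<in> {1..r} \<times> {1..s}" "\<rho> p = t0"
      using assms(5) unfolding bij_betw_def by (metis imageE)
    obtain i0 j0 where ij: "p = (i0, j0)" by (cases p)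
    have i0: "i0 \<in> {1..r}" and j0: "j0 \<in> {1..s}" using p ij by auto
    have e1: "a i0 k + b j0 k = 0" using assms(6) i0 j0 k p ij t0 by auto
    have e2: "a' i0 k + b' j0 k = 0" using assms(7) i0 j0 k p ij t0 by auto
    have "a i k + b j0 k = a' i k + b' j0 k" using assms(6,7) i j0 k by auto
    moreover have "a i0 k + b j k = a' i0 k + b' j k" using assms(6,7) i0 j k by auto
    ultimately show ?thesis using e1 e2 by simp
  qed
  show ?thesis using main assms(1,2) by fastforce
qed

end
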